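(* Let $(X,\varphi)$ be an irreducible Smale space, $\mathcal R_1$ a Markov partition with $\max_{R\in\mathcal R_1}\operatorname{diam}R\le\varepsilon_X''/2$, and $\mathcal R_n=\{R\in\bigvee_{i=1-n}^{n-1}\varphi^{-i}(\mathcal R_1):\operatorname{int}R\ne\varnothing\}$ for $n\in\mathbb N$. If $\varphi^{-1}$ is Lipschitz then for every $n\in\mathbb N$ $$\min_{R\in\mathcal R_n}\operatorname{diam}(R)\ge\operatorname{Lip}(\varphi^{-1})^{-n+1}\,\underline{\operatorname{diam}}_s\mathcal R_1,$$ and if $\varphi$ is Lipschitz then for every $n\in\mathbb N$ $$\min_{R\in\mathcal R_n}\operatorname{diam}(R)\ge\operatorname{Lip}(\varphi)^{-n+1}\,\underline{\operatorname{diam}}_u\mathcal R_1.$$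
   Context: Here $\underline{\operatorname{diam}}_s\mathcal R_1=\min_{R\in\mathcal R_1}\inf_{x\in R}\operatorname{diam}(X^s(x,R))$ and $\underline{\operatorname{diam}}_u\mathcal R_1=\min_{R\in\mathcal R_1}\inf_{x\in R}\operatorname{diam}(X^u(x,R))$. A Smale space $(X,\varphi)$: compact metric space $(X,d)$ (assumed infinite), homeomorphism $\varphi$, constants $\varepsilon_X>0,\lambda_X>1$ and a continuous bracket $[\cdot,\cdot]$ on $\{(x,y):d(x,y)\le\varepsilon_X\}$ with $[x,x]=x$, $[x,[y,z]]=[x,z]$, $[[x,y],z]=[x,z]$, $\varphi([x,y])=[\varphi(x),\varphi(y)]$ (whenever defined), such that $\varphi$ contracts distances by $\lambda_X^{-1}$ on local stable sets $X^s(x,\varepsilon)=\{y:d(x,y)<\varepsilon,[x,y]=y\}$ and $\varphi^{-1}$ contracts by $\lambda_X^{-1}$ on local unstable sets $X^u(x,\varepsilon)=\{y:d(x,y)<\varepsilon,[y,x]=y\}$. Irreducible: for nonempty open $U,V$ some $n\in\mathbb N$ has $\varphi^n(U)\cap V\ne\varnothing$. Fix $\varepsilon_X'\in(0,\varepsilon_X/2]$ with $d(x,y)\le\varepsilon_X'\Rightarrow d(x,[x,y]),d(y,[x,y])<\varepsilon_X/2$, and $\varepsilon_X''\in(0,\varepsilon_X'/12)$ with $d(x,y)\le\varepsilon_X''\Rightarrow d(\varphi^i x,\varphi^i y)\le\varepsilon_X'/2$ ($|i|\le2$) and $d([x,y],x),d([x,y],y)\le\varepsilon_X'/4$. Rectangle: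 nonempty $R$, $\operatorname{diam}R\le\varepsilon_X'$, $[x,y]\in R$ for $x,y\in R$; $X^{s}(x,R)=X^{s}(x,2\varepsilon_X')\cap R$, $X^{u}(x,R)=X^{u}(x,2\varepsilon_X')\cap R$; proper: closed with $R=\operatorname{cl}\operatorname{int}R$. Markov partition: finite cover by nonempty proper rectangles with pairwise disjoint interiors such that $\varphi(X^u(x,R_i))\supset X^u(\varphi x,R_j)$ and $\varphi(X^s(x,R_i))\subset X^s(\varphi x,R_j)$ whenever $x\in\operatorname{int}R_i\cap\varphi^{-1}(\operatorname{int}R_j)$. $\mathcal U\vee\mathcal W=\{U\cap W\}$. *)

theory Defs
  imports "HOL-Analysis.Analysis"
begin

definition phi_pow :: "('a \<Rightarrow> 'a) \<Rightarrow> int \<Rightarrow> 'a \<Rightarrow> 'a" where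
  "phi_pow f i = (if 0 \<le> i then f ^^ nat i else (inv f) ^^ nat (- i))"

definition smale_space ::
  "('a::metric_space \<Rightarrow> 'a) \<Rightarrow> real \<Rightarrow> real \<Rightarrow> ('a \<Rightarrow> 'a \<Rightarrow> 'a) \<Rightarrow> bool" where
  "smale_space phi eps lam br \<longleftrightarrow>
     compact (UNIV :: 'a set) \<and> infinite (UNIV :: 'a set) \<and>
     bij phi \<and> continuous_on UNIV phi \<and> continuous_on UNIV (inv phi) \<and>
     eps > 0 \<and> lam > 1 \<and>
     continuous_on {(x, y). dist x y \<le> eps} (\<lambda>(x, y). br x y) \<and>
     (\<forall>x. br x x = x) \<and>
     (\<forall>x y z. dist y z \<le> eps \<and> dist x (br y z) \<le> eps \<and> dist x z \<le> eps
        \<longrightarrow> br x (br y z) = br x z) \<and>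
     (\<forall>x y z. dist x y \<le> eps \<and> dist (br x y) z \<le> eps \<and> dist x z \<le> eps
        \<longrightarrow> br (br x y) z = br x z) \<and>
     (\<forall>x y. dist x y \<le> eps \<and> dist (phi x) (phi y) \<le> eps
        \<longrightarrow> phi (br x y) = br (phi x) (phi y)) \<and>
     (\<forall>x y. dist x y < eps \<and> br x y = y
        \<longrightarrow> dist (phi x) (phi y) \<le> dist x y / lam) \<and>
     (\<forall>x y. dist x y < eps \<and> br y x = y
        \<longrightarrow> dist (inv phi x) (inv phi y) \<le> dist x y / lam)"

definition loc_stable :: "('a::metric_space \<Rightarrow> 'a \<Rightarrow> 'a) \<Rightarrow> 'a \<Rightarrow> real \<Rightarrow> 'a set" where
  "loc_stable br x e = {y. dist x y < e \<and> br x y = y}"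

definition loc_unstable :: "('a::metric_space \<Rightarrow> 'a \<Rightarrow> 'a) \<Rightarrow> 'a \<Rightarrow> real \<Rightarrow> 'a set" where
  "loc_unstable br x e = {y. dist x y < e \<and> br y x = y}"

definition irreducible_map :: "('a::topological_space \<Rightarrow> 'a) \<Rightarrow> bool" where
  "irreducible_map phi \<longleftrightarrow>
     (\<forall>U V. open U \<and> open V \<and> U \<noteq> {} \<and> V \<noteq> {} \<longrightarrow>
        (\<exists>n::nat. n \<ge> 1 \<and> (phi ^^ n) ` U \<inter> V \<noteq> {}))"

text \<open>Admissibility of the auxiliary constants eps' (e1) and eps'' (e2).\<close>
definition eps1_ok :: "('a::metric_space \<Rightarrow> 'a \<Rightarrow> 'a) \<Rightarrow> real \<Rightarrow> real \<Rightarrow> bool" where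
  "eps1_ok br eps e1 \<longleftrightarrow> 0 < e1 \<and> e1 \<le> eps / 2 \<and>
     (\<forall>x y. dist x y \<le> e1 \<longrightarrow> dist x (br x y) < eps / 2 \<and> dist y (br x y) < eps / 2)"

definition eps2_ok :: "('a::metric_space \<Rightarrow> 'a) \<Rightarrow> ('a \<Rightarrow> 'a \<Rightarrow> 'a) \<Rightarrow> real \<Rightarrow> real \<Rightarrow> bool" where
  "eps2_ok phi br e1 e2 \<longleftrightarrow> 0 < e2 \<and> e2 < e1 / 12 \<and>
     (\<forall>x y. dist x y \<le> e2 \<longrightarrow>
        (\<forall>i::int. \<bar>i\<bar> \<le> 2 \<longrightarrow> dist (phi_pow phi i x) (phi_pow phi i y) \<le> e1 / 2) \<and>
        dist (br x y) x \<le> e1 / 4 \<and> dist (br x y) y \<le> e1 / 4)"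

definition rectangle :: "('a::metric_space \<Rightarrow> 'a \<Rightarrow> 'a) \<Rightarrow> real \<Rightarrow> 'a set \<Rightarrow> bool" where
  "rectangle br e1 R \<longleftrightarrow> R \<noteq> {} \<and> diameter R \<le> e1 \<and> (\<forall>x\<in>R. \<forall>y\<in>R. br x y \<in> R)"

definition Xs_R :: "('a::metric_space \<Rightarrow> 'a \<Rightarrow> 'a) \<Rightarrow> real \<Rightarrow> 'a \<Rightarrow> 'a set \<Rightarrow> 'a set" where
  "Xs_R br e1 x R = loc_stable br x (2 * e1) \<inter> R"

definition Xu_R :: "('a::metric_space \<Rightarrow> 'a \<Rightarrow> 'a) \<Rightarrow> real \<Rightarrow> 'a \<Rightarrow> 'a set \<Rightarrow> 'a set" where
  "Xu_R br e1 x R = loc_unstable br x (2 * e1) \<inter> R"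

definition proper_rectangle :: "('a::metric_space \<Rightarrow> 'a \<Rightarrow> 'a) \<Rightarrow> real \<Rightarrow> 'a set \<Rightarrow> bool" where
  "proper_rectangle br e1 R \<longleftrightarrow> rectangle br e1 R \<and> closed R \<and> R = closure (interior R)"

definition markov_partition ::
  "('a::metric_space \<Rightarrow> 'a) \<Rightarrow> ('a \<Rightarrow> 'a \<Rightarrow> 'a) \<Rightarrow> real \<Rightarrow> 'a set set \<Rightarrow> bool" where
  "markov_partition phi br e1 P \<longleftrightarrow>
     finite P \<and> \<Union>P = UNIV \<and> (\<forall>R\<in>P. proper_rectangle br e1 R) \<and>
     (\<forall>R\<in>P. \<forall>R'\<in>P. R \<noteq> R' \<longrightarrow> interior R \<inter> interior R' = {}) \<and>
     (\<forall>Ri\<in>P. \<forall>Rj\<in>P. \<forall>x \<in> interior Ri \<inter> phi -` interior Rj.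
        Xu_R br e1 (phi x) Rj \<subseteq> phi ` Xu_R br e1 x Ri \<and>
        phi ` Xs_R br e1 x Ri \<subseteq> Xs_R br e1 (phi x) Rj)"

definition refined_partition :: "('a::topological_space \<Rightarrow> 'a) \<Rightarrow> 'a set set \<Rightarrow> nat \<Rightarrow> 'a set set" where
  "refined_partition phi P n =
     {R. interior R \<noteq> {} \<and>
         (\<exists>f. (\<forall>i\<in>{1 - int n..int n - 1}. f i \<in> P) \<and>
              R = (\<Inter>i\<in>{1 - int n..int n - 1}. phi_pow phi (- i) ` f i))}"

definition diam_s :: "('a::metric_space \<Rightarrow> 'a \<Rightarrow> 'a) \<Rightarrow> real \<Rightarrow> 'a set set \<Rightarrow> real" where
  "diam_s br e1 P = Min ((\<lambda>R. INF x\<in>R. diameter (Xs_R br e1 x R)) ` P)"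

definition diam_u :: "('a::metric_space \<Rightarrow> 'a \<Rightarrow> 'a) \<Rightarrow> real \<Rightarrow> 'a set set \<Rightarrow> real" where
  "diam_u br e1 P = Min ((\<lambda>R. INF x\<in>R. diameter (Xu_R br e1 x R)) ` P)"

definition Lip :: "('a::metric_space \<Rightarrow> 'b::metric_space) \<Rightarrow> real" where
  "Lip f = Inf {L. L-lipschitz_on UNIV f}"

end

theory Submission
  imports Defs
begin

lemma phi_pow_succ:
  assumes "bij f"
  shows "phi_pow f (i + 1) x = f (phi_pow f i x)"
proof (cases "0 \<le> i")
  case True
  then have "nat (i+1) = Suc (nat i)" by simp
  then show ?thesis using True by (simp add: phi_pow_def)
next
  case False
  then have "nat (-i) = Suc (nat (-(i+1)))" by simp
  then have "phi_pow f i x = inv f (phi_pow f (i+1) x)"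
    using False by (simp add: phi_pow_def)
  then show ?thesis using assms by (simp add: bij_is_surj surj_f_inv_f)
qed

lemma phi_pow_pred:
  assumes "bij f"
  shows "phi_pow f (i - 1) x = inv f (phi_pow f i x)"
  using phi_pow_succ[OF assms, of "i - 1" x] assms
  by (simp add: bij_is_inj inv_f_f)

lemma phi_pow_0: "phi_pow f 0 x = x"
  by (simp add: phi_pow_def)

lemma phi_pow_add:
  assumes "bij f"
  shows "phi_pow f a (phi_pow f b x) = phi_pow f (a + b) x"
proof (induction a rule: int_induct[where k=0])
  case base then show ?case by (simp add: phi_pow_0)
next
  case (step1 i)
  then show ?case using phi_pow_succ[OF assms]
    by (metis add.commute add.left_commute)
next
  case (step2 i)
  then show ?case using phi_pow_pred[OF assms]
    by (metis add.commute add_diff_eq)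
qed

lemma phi_pow_nat: "phi_pow f (int k) = f ^^ k"
  by (simp add: phi_pow_def)

lemma phi_pow_neg_nat: "phi_pow f (- int k) = inv f ^^ k"
  by (cases "k = 0") (auto simp: phi_pow_def)

lemma phi_pow_image:
  assumes "bij f"
  shows "phi_pow f (- i) ` A = phi_pow f i -` A"
proof
  show "phi_pow f (- i) ` A \<subseteq> phi_pow f i -` A"
    using phi_pow_add[OF assms, of i "-i"] by (auto simp: phi_pow_0)
  show "phi_pow f i -` A \<subseteq> phi_pow f (- i) ` A"
  proof
    fix x assume "x \<in> phi_pow f i -` A"
    moreover have "x = phi_pow f (-i) (phi_pow f i x)"
      using phi_pow_add[OF assms, of "-i" i] by (simp add: phi_pow_0)
    ultimately show "x \<in> phi_pow f (- i) ` A" by blast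
  qed
qed

lemma funpow_cont:
  fixes g :: "'a::topological_space \<Rightarrow> 'a"
  assumes "continuous_on UNIV g"
  shows "continuous_on UNIV (g ^^ k)"
proof (induction k)
  case 0 then show ?case by (simp add: funpow.simps(1) continuous_on_id')
next
  case (Suc k)
  then show ?case
    by (simp only: funpow.simps) (metis assms continuous_on_compose continuous_on_subset top_greatest)
qed

lemma phi_pow_cont:
  fixes f :: "'a::topological_space \<Rightarrow> 'a"
  assumes "continuous_on UNIV f" "continuous_on UNIV (inv f)"
  shows "continuous_on UNIV (phi_pow f i)"
  unfolding phi_pow_def using funpow_cont assms by auto

lemma funpow_lip:
  fixes g :: "'a::metric_space \<Rightarrow> 'a"
  assumes "L-lipschitz_on UNIV g"
  shows "(L ^ k)-lipschitz_on UNIV (g ^^ k)"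
proof (induction k)
  case 0 then show ?case by (simp add: lipschitz_on_def funpow.simps(1))
next
  case (Suc k)
  have L0: "0 \<le> L" using assms by (simp add: lipschitz_on_def)
  show ?case unfolding lipschitz_on_def
  proof (intro conjI ballI)
    show "0 \<le> L ^ Suc k" using L0 by simp
    fix x y :: 'a
    have "dist ((g ^^ Suc k) x) ((g ^^ Suc k) y) \<le> L * dist ((g ^^ k) x) ((g ^^ k) y)"
      using assms by (simp add: lipschitz_on_def)
    also have "\<dots> \<le> L * (L ^ k * dist x y)"
      using Suc L0 by (simp add: lipschitz_on_def mult_left_mono)
    finally show "dist ((g ^^ Suc k) x) ((g ^^ Suc k) y) \<le> L ^ Suc k * dist x y"
      by (simp add: mult.assoc)
  qed
qed

lemma Lip_lip:
  assumes "\<exists>L. L-lipschitz_on UNIV g"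
  shows "(Lip g)-lipschitz_on UNIV g"
proof -
  let ?S = "{L. L-lipschitz_on UNIV g}"
  have ne: "?S \<noteq> {}" using assms by auto
  have bdd: "bdd_below ?S" by (rule bdd_belowI[of _ 0]) (simp add: lipschitz_on_def)
  have "0 \<le> Lip g" unfolding Lip_def
    by (rule cInf_greatest[OF ne]) (simp add: lipschitz_on_def)
  moreover have "dist (g x) (g y) \<le> Lip g * dist x y" for x y
  proof (cases "x = y")
    case True then show ?thesis by simp
  next
    case False
    then have d: "0 < dist x y" by simp
    have "dist (g x) (g y) / dist x y \<le> Lip g" unfolding Lip_def
    proof (rule cInf_greatest[OF ne])
      fix L assume "L \<in> ?S"
      then have "dist (g x) (g y) \<le> L * dist x y" by (simp add: lipschitz_on_def)
      then show "dist (g x) (g y) / dist x y \<le> L" using d by (simp add: divide_le_eq)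
    qed
    then show ?thesis using d by (simp add: divide_le_eq)
  qed
  ultimately show ?thesis by (simp add: lipschitz_on_def)
qed

lemma diameter_lip_image:
  assumes "L-lipschitz_on UNIV g" "bounded S"
  shows "diameter (g ` S) \<le> L * diameter S"
proof (cases "S = {}")
  case True then show ?thesis by simp
next
  case False
  have L0: "0 \<le> L" using assms by (simp add: lipschitz_on_def)
  have "dist (g a) (g b) \<le> L * diameter S" if "a \<in> S" "b \<in> S" for a b
  proof -
    have "dist (g a) (g b) \<le> L * dist a b" using assms by (simp add: lipschitz_on_def)
    also have "\<dots> \<le> L * diameter S"
      using diameter_bounded_bound[OF assms(2) that] L0 by (simp add: mult_left_mono)
    finally show ?thesis .
  qed
  then show ?thesis using False unfolding diameter_def
    by (auto intro!: cSUP_least)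
qed

lemma closed_union_interior:
  assumes "finite F" "\<forall>A\<in>F. closed A \<and> interior A = {}"
  shows "interior (\<Union>F) = {}"
  using assms
proof (induction F rule: finite_induct)
  case empty then show ?case by simp
next
  case (insert A F)
  then have "interior (A \<union> \<Union>F) = interior A"
    by (simp add: interior_closed_Un_empty_interior)
  then show ?case using insert by simp
qed


lemma open_pre: "continuous_on UNIV h \<Longrightarrow> open S \<Longrightarrow> open (h -` S)"
  using continuous_on_open_vimage[of UNIV h] by simp
lemma closed_pre: "continuous_on UNIV h \<Longrightarrow> closed S \<Longrightarrow> closed (h -` S)"
  using continuous_on_closed_vimage[of UNIV h] by simp

lemma chain_lemma:
  assumes "\<And>k. k < m \<Longrightarrow> g ` C k \<subseteq> C (Suc k)"
  shows "k \<le> m \<Longrightarrow> (g ^^ k) ` C 0 \<subseteq> C k"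
proof (induction k)
  case 0 then show ?case by simp
next
  case (Suc k)
  have "(g ^^ Suc k) ` C 0 = g ` ((g ^^ k) ` C 0)" by (simp add: image_comp)
  also have "\<dots> \<subseteq> g ` C k" using Suc by (intro image_mono) simp
  also have "\<dots> \<subseteq> C (Suc k)" using assms Suc by simp
  finally show ?case .
qed

lemma RP_finite:
  assumes "finite P"
  shows "finite (refined_partition phi P n)"
proof -
  let ?I = "{1 - int n..int n - 1}"
  have "refined_partition phi P n \<subseteq>
     (\<lambda>F. \<Inter>i\<in>?I. phi_pow phi (- i) ` F i) ` (?I \<rightarrow>\<^sub>E P)"
  proof
    fix R assume "R \<in> refined_partition phi P n"
    then obtain f where f: "\<forall>i\<in>?I. f i \<in> P" "R = (\<Inter>i\<in>?I. phi_pow phi (- i) ` f i)"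
      unfolding refined_partition_def by blast
    have "restrict f ?I \<in> ?I \<rightarrow>\<^sub>E P" using f by auto
    moreover have "R = (\<Inter>i\<in>?I. phi_pow phi (- i) ` restrict f ?I i)" using f by simp
    ultimately show "R \<in> (\<lambda>F. \<Inter>i\<in>?I. phi_pow phi (- i) ` F i) ` (?I \<rightarrow>\<^sub>E P)" by blast
  qed
  moreover have "finite (?I \<rightarrow>\<^sub>E P)" using assms by (intro finite_PiE) auto
  ultimately show ?thesis by (meson finite_imageI finite_subset)
qed

lemma RP_nonempty:
  fixes phi :: "'a::metric_space \<Rightarrow> 'a"
  assumes "bij phi" "continuous_on UNIV phi" "continuous_on UNIV (inv phi)"
    and "finite P" "\<Union>P = UNIV" "\<forall>R\<in>P. closed R"
  shows "refined_partition phi P n \<noteq> {}"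
proof -
  define I where "I = {1 - int n..int n - 1}"
  define G where "G = (\<lambda>F. \<Inter>i\<in>I. phi_pow phi (- i) ` F i)"
  define FF where "FF = G ` (I \<rightarrow>\<^sub>E P)"
  have "finite (I \<rightarrow>\<^sub>E P)"
    by (rule finite_PiE) (simp_all add: I_def assms(4))
  then have fin: "finite FF" unfolding FF_def by (rule finite_imageI)
  have cl: "closed (G F)" if FI: "F \<in> I \<rightarrow>\<^sub>E P" for F
  proof -
    have "closed (phi_pow phi (- i) ` F i)" if "i \<in> I" for i
      unfolding phi_pow_image[OF assms(1)]
    proof (rule closed_pre[OF phi_pow_cont[OF assms(2,3)]])
      have "F i \<in> P" using that FI by (simp add: PiE_iff)
      then show "closed (F i)" using assms(6) by simp
    qed
    then show ?thesis unfolding G_def by (intro closed_INT ballI)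
  qed
  have cov: "x \<in> \<Union>FF" for x
  proof -
    define F where "F = (\<lambda>i. if i \<in> I then (SOME R. R \<in> P \<and> phi_pow phi i x \<in> R) else undefined)"
    have FP: "F i \<in> P \<and> phi_pow phi i x \<in> F i" if "i \<in> I" for i
    proof -
      have "phi_pow phi i x \<in> \<Union>P" using assms(5) by simp
      then have ex: "\<exists>R. R \<in> P \<and> phi_pow phi i x \<in> R" by (simp only: Union_iff) blast
      have "F i = (SOME R. R \<in> P \<and> phi_pow phi i x \<in> R)" using that by (simp add: F_def)
      then show ?thesis using someI_ex[OF ex] by simp
    qed
    have "F \<in> I \<rightarrow>\<^sub>E P" unfolding PiE_iff extensional_def
      using FP by (simp add: F_def)
    moreover have "x \<in> G F" unfolding G_def phi_pow_image[OF assms(1)] using FP by blast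
    ultimately show "x \<in> \<Union>FF" unfolding FF_def by blast
  qed
  have "\<exists>A\<in>FF. interior A \<noteq> {}"
  proof (rule ccontr)
    assume "\<not> (\<exists>A\<in>FF. interior A \<noteq> {})"
    then have "\<forall>A\<in>FF. closed A \<and> interior A = {}" using cl unfolding FF_def by blast
    then have "interior (\<Union>FF) = {}" using fin by (intro closed_union_interior) 
    moreover have "\<Union>FF = UNIV" using cov by blast
    ultimately show False by simp
  qed
  then obtain F where F: "F \<in> I \<rightarrow>\<^sub>E P" "interior (G F) \<noteq> {}" unfolding FF_def by blast
  have "\<forall>i\<in>I. F i \<in> P" using F(1) by (simp add: PiE_iff)
  then have "G F \<in> refined_partition phi P n"
    unfolding refined_partition_def mem_Collect_eq using F(2) unfolding G_def I_def by blast
  then show ?thesis by blast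
qed

lemma int_mem:
  fixes phi :: "'a::metric_space \<Rightarrow> 'a"
  assumes "bij phi" "continuous_on UNIV phi" "continuous_on UNIV (inv phi)"
    and "x \<in> interior R" "R \<subseteq> phi_pow phi (- i) ` A"
  shows "phi_pow phi i x \<in> interior A"
proof -
  have "interior R \<subseteq> phi_pow phi i -` A"
    using assms(5) interior_subset[of R] unfolding phi_pow_image[OF assms(1)] by blast
  then have sub: "phi_pow phi i ` interior R \<subseteq> A" by blast
  have "phi_pow phi i ` interior R = phi_pow phi (- i) -` interior R"
    using phi_pow_image[OF assms(1), of "- i"] by simp
  then have "open (phi_pow phi i ` interior R)"
    by (simp add: open_pre phi_pow_cont assms(2,3))
  then have "phi_pow phi i ` interior R \<subseteq> interior A"
    by (rule interior_maximal[OF sub])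
  then show ?thesis using assms(4) by blast
qed

lemma stable_bound:
  fixes phi :: "'a::metric_space \<Rightarrow> 'a"
  assumes bij: "bij phi" and c1: "continuous_on UNIV phi" and c2: "continuous_on UNIV (inv phi)"
    and cpt: "compact (UNIV :: 'a set)"
    and finP: "finite P"
    and mk: "\<forall>Ri\<in>P. \<forall>Rj\<in>P. \<forall>x \<in> interior Ri \<inter> phi -` interior Rj.
        phi ` Xs_R br e1 x Ri \<subseteq> Xs_R br e1 (phi x) Rj"
    and lip: "L-lipschitz_on UNIV (inv phi)"
    and RP: "R \<in> refined_partition phi P n" and n1: "n \<ge> 1"
  shows "diam_s br e1 P \<le> L ^ (n - 1) * diameter R"
proof -
  have bnd: "bounded (S :: 'a set)" for S
    using bounded_subset[OF compact_imp_bounded[OF cpt]] by blast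
  define N where "N = n - 1"
  have IN: "{1 - int n..int n - 1} = {- int N..int N}" using n1 by (auto simp: N_def)
  obtain f where f: "\<forall>i\<in>{- int N..int N}. f i \<in> P"
      "R = (\<Inter>i\<in>{- int N..int N}. phi_pow phi (- i) ` f i)" and iR: "interior R \<noteq> {}"
    using RP unfolding refined_partition_def IN by blast
  obtain x where x: "x \<in> interior R" using iR by blast
  have intx: "phi_pow phi i x \<in> interior (f i)" if "i \<in> {- int N..int N}" for i
    using int_mem[OF bij c1 c2 x, of i "f i"] f(2) that by blast
  define y where "y = phi_pow phi (- int N) x"
  define A where "A = (\<lambda>k::nat. f (int k - int N))"
  define C where "C = (\<lambda>k. Xs_R br e1 ((phi ^^ k) y) (A k))"
  have yk: "(phi ^^ k) y \<in> interior (A k)" "A k \<in> P" if "k \<le> 2 * N" for k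
  proof -
    have "(phi ^^ k) y = phi_pow phi (int k - int N) x"
      unfolding y_def phi_pow_nat[symmetric] phi_pow_add[OF bij] by simp
    moreover have "int k - int N \<in> {- int N..int N}" using that by auto
    ultimately show "(phi ^^ k) y \<in> interior (A k)" "A k \<in> P"
      using intx f(1) unfolding A_def by auto
  qed
  have step: "phi ` C k \<subseteq> C (Suc k)" if "k < 2 * N" for k
  proof -
    have "(phi ^^ k) y \<in> interior (A k) \<inter> phi -` interior (A (Suc k))"
      using yk[of k] yk[of "Suc k"] that by simp
    then show ?thesis unfolding C_def using mk yk[of k] yk[of "Suc k"] that by simp
  qed
  have Ck: "(phi ^^ k) ` C 0 \<subseteq> A k" if "k \<le> 2 * N" for k
    using chain_lemma[of "2 * N" phi C k, OF step that] unfolding C_def Xs_R_def by blast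
  have inR: "(phi ^^ N) ` C 0 \<subseteq> R"
  proof
    fix w assume "w \<in> (phi ^^ N) ` C 0"
    then obtain z where z: "z \<in> C 0" "w = (phi ^^ N) z" by blast
    have "w \<in> phi_pow phi (- i) ` f i" if i: "i \<in> {- int N..int N}" for i
    proof -
      have e: "int (nat (i + int N)) = i + int N" using i by simp
      have "phi_pow phi i w = phi_pow phi (i + int N) z"
        unfolding z(2) phi_pow_nat[symmetric] phi_pow_add[OF bij] ..
      also have "\<dots> = (phi ^^ nat (i + int N)) z"
        unfolding phi_pow_nat[symmetric] e ..
      finally have eq: "phi_pow phi i w = (phi ^^ nat (i + int N)) z" .
      have "nat (i + int N) \<le> 2 * N" using i by auto
      then have "phi_pow phi i w \<in> A (nat (i + int N))"
        using Ck[of "nat (i + int N)"] z(1) eq by auto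
      then have "phi_pow phi i w \<in> f i" unfolding A_def e by simp
      then show ?thesis unfolding phi_pow_image[OF bij] by simp
    qed
    then show "w \<in> R" unfolding f(2) by blast
  qed
  have bk: "C 0 = (inv phi ^^ N) ` ((phi ^^ N) ` C 0)"
  proof -
    have "(inv phi ^^ N) ((phi ^^ N) z) = z" for z
      using phi_pow_add[OF bij, of "- int N" "int N" z]
      by (simp add: phi_pow_0 phi_pow_nat phi_pow_neg_nat)
    then show ?thesis by (simp add: image_comp)
  qed
  have L0: "0 \<le> L" using lip by (simp add: lipschitz_on_def)
  have "diameter (C 0) \<le> L ^ N * diameter ((phi ^^ N) ` C 0)"
    using diameter_lip_image[OF funpow_lip[OF lip, of N] bnd] bk by metis
  also have "\<dots> \<le> L ^ N * diameter R"
    using diameter_subset[OF inR bnd] L0 by (simp add: mult_left_mono)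
  finally have dC: "diameter (C 0) \<le> L ^ N * diameter R" .
  have y0: "y \<in> A 0" "A 0 \<in> P" using yk[of 0] interior_subset by auto
  have "diam_s br e1 P \<le> (INF x\<in>A 0. diameter (Xs_R br e1 x (A 0)))"
    unfolding diam_s_def using finP y0 by (intro Min_le) auto
  also have "\<dots> \<le> diameter (Xs_R br e1 y (A 0))"
    by (rule cINF_lower[OF _ y0(1)]) (auto intro!: bdd_belowI[of _ 0] diameter_ge_0 bnd)
  also have "\<dots> = diameter (C 0)" unfolding C_def by simp
  finally show ?thesis using dC N_def by simp
qed


lemma unstable_bound:
  fixes phi :: "'a::metric_space \<Rightarrow> 'a"
  assumes bij: "bij phi" and c1: "continuous_on UNIV phi" and c2: "continuous_on UNIV (inv phi)"
    and cpt: "compact (UNIV :: 'a set)"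
    and finP: "finite P"
    and mk: "\<forall>Ri\<in>P. \<forall>Rj\<in>P. \<forall>x \<in> interior Ri \<inter> phi -` interior Rj.
        Xu_R br e1 (phi x) Rj \<subseteq> phi ` Xu_R br e1 x Ri"
    and lip: "L-lipschitz_on UNIV phi"
    and RP: "R \<in> refined_partition phi P n" and n1: "n \<ge> 1"
  shows "diam_u br e1 P \<le> L ^ (n - 1) * diameter R"
proof -
  have bnd: "bounded (S :: 'a set)" for S
    using bounded_subset[OF compact_imp_bounded[OF cpt]] by blast
  define g where "g = inv phi"
  have gk: "g ^^ k = phi_pow phi (- int k)" for k
    unfolding g_def by (simp add: phi_pow_neg_nat)
  have pk: "phi ^^ k = phi_pow phi (int k)" for k
    by (simp add: phi_pow_nat)
  have pg: "phi (g a) = a" for a unfolding g_def using bij by (simp add: bij_is_surj surj_f_inv_f)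
  have gp: "g (phi a) = a" for a unfolding g_def using bij by (simp add: bij_is_inj inv_f_f)
  define N where "N = n - 1"
  have IN: "{1 - int n..int n - 1} = {- int N..int N}" using n1 by (auto simp: N_def)
  obtain f where f: "\<forall>i\<in>{- int N..int N}. f i \<in> P"
      "R = (\<Inter>i\<in>{- int N..int N}. phi_pow phi (- i) ` f i)" and iR: "interior R \<noteq> {}"
    using RP unfolding refined_partition_def IN by blast
  obtain x where x: "x \<in> interior R" using iR by blast
  have intx: "phi_pow phi i x \<in> interior (f i)" if "i \<in> {- int N..int N}" for i
    using int_mem[OF bij c1 c2 x, of i "f i"] f(2) that by blast
  define y where "y = phi_pow phi (int N) x"
  define A where "A = (\<lambda>k::nat. f (int N - int k))"
  define C where "C = (\<lambda>k. Xu_R br e1 ((g ^^ k) y) (A k))"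
  have yk: "(g ^^ k) y \<in> interior (A k)" "A k \<in> P" if "k \<le> 2 * N" for k
  proof -
    have "(g ^^ k) y = phi_pow phi (int N - int k) x"
      unfolding y_def gk phi_pow_add[OF bij] by simp
    moreover have "int N - int k \<in> {- int N..int N}" using that by auto
    ultimately show "(g ^^ k) y \<in> interior (A k)" "A k \<in> P"
      using intx f(1) unfolding A_def by auto
  qed
  have step: "g ` C k \<subseteq> C (Suc k)" if "k < 2 * N" for k
  proof -
    have ph: "phi ((g ^^ Suc k) y) = (g ^^ k) y" by (simp add: pg)
    have "(g ^^ Suc k) y \<in> interior (A (Suc k)) \<inter> phi -` interior (A k)"
      using yk[of k] yk[of "Suc k"] that ph by simp
    moreover have AP: "A k \<in> P" "A (Suc k) \<in> P" using yk[of k] yk[of "Suc k"] that by auto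
    ultimately have "Xu_R br e1 (phi ((g ^^ Suc k) y)) (A k) \<subseteq> phi ` Xu_R br e1 ((g ^^ Suc k) y) (A (Suc k))"
      using mk by blast
    then have "Xu_R br e1 ((g ^^ k) y) (A k) \<subseteq> phi ` Xu_R br e1 ((g ^^ Suc k) y) (A (Suc k))"
      unfolding ph .
    then have "g ` C k \<subseteq> g ` phi ` C (Suc k)" unfolding C_def by (rule image_mono)
    also have "\<dots> = C (Suc k)" by (simp add: image_comp gp)
    finally show ?thesis .
  qed
  have Ck: "(g ^^ k) ` C 0 \<subseteq> A k" if "k \<le> 2 * N" for k
    using chain_lemma[of "2 * N" g C k, OF step that] unfolding C_def Xu_R_def by blast
  have inR: "(g ^^ N) ` C 0 \<subseteq> R"
  proof
    fix w assume "w \<in> (g ^^ N) ` C 0"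
    then obtain z where z: "z \<in> C 0" "w = (g ^^ N) z" by blast
    have "w \<in> phi_pow phi (- i) ` f i" if i: "i \<in> {- int N..int N}" for i
    proof -
      have e: "int (nat (int N - i)) = int N - i" using i by simp
      have "phi_pow phi i w = phi_pow phi (i - int N) z"
        unfolding z(2) gk phi_pow_add[OF bij] by simp
      also have "\<dots> = (g ^^ nat (int N - i)) z"
        unfolding gk e by simp
      finally have eq: "phi_pow phi i w = (g ^^ nat (int N - i)) z" .
      have "nat (int N - i) \<le> 2 * N" using i by auto
      then have "phi_pow phi i w \<in> A (nat (int N - i))"
        using Ck[of "nat (int N - i)"] z(1) eq by auto
      then have "phi_pow phi i w \<in> f i" unfolding A_def e by simp
      then show ?thesis unfolding phi_pow_image[OF bij] by simp
    qed
    then show "w \<in> R" unfolding f(2) by blast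
  qed
  have bk: "C 0 = (phi ^^ N) ` ((g ^^ N) ` C 0)"
  proof -
    have "(phi ^^ N) ((g ^^ N) z) = z" for z
      using phi_pow_add[OF bij, of "int N" "- int N" z]
      by (simp add: phi_pow_0 gk pk)
    then show ?thesis by (simp add: image_comp)
  qed
  have L0: "0 \<le> L" using lip by (simp add: lipschitz_on_def)
  have "diameter (C 0) \<le> L ^ N * diameter ((g ^^ N) ` C 0)"
    using diameter_lip_image[OF funpow_lip[OF lip, of N] bnd] bk by metis
  also have "\<dots> \<le> L ^ N * diameter R"
    using diameter_subset[OF inR bnd] L0 by (simp add: mult_left_mono)
  finally have dC: "diameter (C 0) \<le> L ^ N * diameter R" .
  have y0: "y \<in> A 0" "A 0 \<in> P" using yk[of 0] interior_subset by auto
  have "diam_u br e1 P \<le> (INF x\<in>A 0. diameter (Xu_R br e1 x (A 0)))"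
    unfolding diam_u_def using finP y0 by (intro Min_le) auto
  also have "\<dots> \<le> diameter (Xu_R br e1 y (A 0))"
    by (rule cINF_lower[OF _ y0(1)]) (auto intro!: bdd_belowI[of _ 0] diameter_ge_0 bnd)
  also have "\<dots> = diameter (C 0)" unfolding C_def by simp
  finally show ?thesis using dC N_def by simp
qed


lemma arith_fin:
  fixes L ds d :: real
  assumes "ds \<le> L ^ N * d" "0 \<le> L" "0 \<le> d"
  shows "inverse L ^ N * ds \<le> d"
proof (cases "L = 0")
  case True
  then show ?thesis using assms by (cases N) auto
next
  case False
  then have Lp: "0 < L ^ N" using assms by simp
  have one: "inverse L ^ N * L ^ N = 1" using False by (simp add: power_mult_distrib[symmetric])
  have "inverse L ^ N * ds \<le> inverse L ^ N * (L ^ N * d)"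
    using assms(1) Lp by (intro mult_left_mono) (auto simp: power_inverse)
  also have "\<dots> = (inverse L ^ N * L ^ N) * d" by (simp add: mult.assoc)
  also have "\<dots> = d" using one by simp
  finally show ?thesis .
qed

theorem lemma6p15:
  fixes phi :: "'a::metric_space \<Rightarrow> 'a" and br :: "'a \<Rightarrow> 'a \<Rightarrow> 'a"
    and eps lam e1 e2 :: real and P :: "'a set set"
  assumes "smale_space phi eps lam br"
    and "irreducible_map phi"
    and "eps1_ok br eps e1"
    and "eps2_ok phi br e1 e2"
    and "markov_partition phi br e1 P"
    and "\<forall>R\<in>P. diameter R \<le> e2 / 2"
  shows "((\<exists>L. L-lipschitz_on UNIV (inv phi)) \<longrightarrow>
           (\<forall>n::nat. n \<ge> 1 \<longrightarrow>
              Min (diameter ` refined_partition phi P n)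
                \<ge> inverse (Lip (inv phi)) ^ (n - 1) * diam_s br e1 P))
       \<and> ((\<exists>L. L-lipschitz_on UNIV phi) \<longrightarrow>
           (\<forall>n::nat. n \<ge> 1 \<longrightarrow>
              Min (diameter ` refined_partition phi P n)
                \<ge> inverse (Lip phi) ^ (n - 1) * diam_u br e1 P))"
proof -
  have cpt: "compact (UNIV :: 'a set)"
    using assms(1) unfolding smale_space_def by (simp only:)
  have bij: "bij phi"
    using assms(1) unfolding smale_space_def by (simp only:)
  have c1: "continuous_on UNIV phi"
    using assms(1) unfolding smale_space_def by (simp only:)
  have c2: "continuous_on UNIV (inv phi)"
    using assms(1) unfolding smale_space_def by (simp only:)
  have finP: "finite P"
    using assms(5) unfolding markov_partition_def by (simp only:)
  have cov: "\<Union>P = UNIV"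
    using assms(5) unfolding markov_partition_def by (simp only:)
  have prP: "\<forall>R\<in>P. proper_rectangle br e1 R"
    using assms(5) unfolding markov_partition_def by (elim conjE) blast
  have mk: "\<forall>Ri\<in>P. \<forall>Rj\<in>P. \<forall>x \<in> interior Ri \<inter> phi -` interior Rj.
        Xu_R br e1 (phi x) Rj \<subseteq> phi ` Xu_R br e1 x Ri \<and>
        phi ` Xs_R br e1 x Ri \<subseteq> Xs_R br e1 (phi x) Rj"
    using assms(5) unfolding markov_partition_def by (elim conjE) assumption
  have clP: "\<forall>R\<in>P. closed R"
    using prP unfolding proper_rectangle_def by blast
  have mks: "\<forall>Ri\<in>P. \<forall>Rj\<in>P. \<forall>x \<in> interior Ri \<inter> phi -` interior Rj.
        phi ` Xs_R br e1 x Ri \<subseteq> Xs_R br e1 (phi x) Rj"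
    and mku: "\<forall>Ri\<in>P. \<forall>Rj\<in>P. \<forall>x \<in> interior Ri \<inter> phi -` interior Rj.
        Xu_R br e1 (phi x) Rj \<subseteq> phi ` Xu_R br e1 x Ri"
    using mk by blast+
  have bnd: "bounded (S :: 'a set)" for S
    using bounded_subset[OF compact_imp_bounded[OF cpt]] by blast
  have fin: "finite (diameter ` refined_partition phi P n)" for n
    using RP_finite[OF finP] by blast
  have ne: "diameter ` refined_partition phi P n \<noteq> {}" for n
    using RP_nonempty[OF bij c1 c2 finP cov clP] by blast
  show ?thesis
  proof (intro conjI impI allI)
    fix n :: nat assume ex: "\<exists>L. L-lipschitz_on UNIV (inv phi)" and n1: "n \<ge> 1"
    have lip: "(Lip (inv phi))-lipschitz_on UNIV (inv phi)" by (rule Lip_lip[OF ex])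
    have L0: "0 \<le> Lip (inv phi)" using lip by (simp add: lipschitz_on_def)
    show "Min (diameter ` refined_partition phi P n)
                \<ge> inverse (Lip (inv phi)) ^ (n - 1) * diam_s br e1 P"
      unfolding Min_ge_iff[OF fin ne]
    proof
      fix d assume "d \<in> diameter ` refined_partition phi P n"
      then obtain R where R: "R \<in> refined_partition phi P n" "d = diameter R" by blast
      show "inverse (Lip (inv phi)) ^ (n - 1) * diam_s br e1 P \<le> d"
        unfolding R(2)
        by (rule arith_fin[OF stable_bound[OF bij c1 c2 cpt finP mks lip R(1) n1] L0 diameter_ge_0[OF bnd]])
    qed
  next
    fix n :: nat assume ex: "\<exists>L. L-lipschitz_on UNIV phi" and n1: "n \<ge> 1"
    have lip: "(Lip phi)-lipschitz_on UNIV phi" by (rule Lip_lip[OF ex])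
    have L0: "0 \<le> Lip phi" using lip by (simp add: lipschitz_on_def)
    show "Min (diameter ` refined_partition phi P n)
                \<ge> inverse (Lip phi) ^ (n - 1) * diam_u br e1 P"
      unfolding Min_ge_iff[OF fin ne]
    proof
      fix d assume "d \<in> diameter ` refined_partition phi P n"
      then obtain R where R: "R \<in> refined_partition phi P n" "d = diameter R" by blast
      show "inverse (Lip phi) ^ (n - 1) * diam_u br e1 P \<le> d"
        unfolding R(2)
        by (rule arith_fin[OF unstable_bound[OF bij c1 c2 cpt finP mku lip R(1) n1] L0 diameter_ge_0[OF bnd]])
    qed
  qed
qed

end
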